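(* Let $f\in\mathcal A$ be such that $$\frac{z}{f(z)}=1+b_1z+\sum_{n=2}^\infty(-1)^nb_nz^n,\qquad z\in\mathbb D,$$ where $b_1\in\mathbb C$ and $b_n\ge0$ for $n\ge2$. Then $f$ is univalent in $\mathbb D$ if and only if $\sum_{n=2}^\infty(n-1)b_n\le 1$.
   Context: $\mathbb D=\{z\in\mathbb C:|z|<1\}$. $\mathcal A$ is the class of functions $f$ analytic in $\mathbb D$ with $f(z)=z+\sum_{k\ge2}a_kz^k$. *)

theory Defs
  imports "HOL-Complex_Analysis.Complex_Analysis"
begin

definition class_A :: "(complex \<Rightarrow> complex) \<Rightarrow> bool" where
  "class_A f \<longleftrightarrow> f holomorphic_on ball 0 1 \<and> f 0 = 0 \<and> deriv f 0 = 1"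

end

theory Submission
  imports Defs
begin

lemma pow_diff_lower:
  fixes s t :: real
  assumes "0 \<le> s" "s \<le> t"
  shows "real (Suc k) * s^k * (t - s) \<le> t^(Suc k) - s^(Suc k)"
proof (induction k)
  case 0 then show ?case by simp
next
  case (Suc k)
  have "t^(Suc (Suc k)) - s^(Suc (Suc k)) = t*(t^Suc k - s^Suc k) + s^Suc k*(t-s)"
    by (simp add: algebra_simps)
  also have "\<dots> \<ge> t*(real (Suc k) * s^k * (t - s)) + s^Suc k*(t-s)"
    using Suc assms by (intro add_right_mono mult_left_mono) auto
  finally have A: "t^(Suc (Suc k)) - s^(Suc (Suc k)) \<ge> t*(real (Suc k) * s^k * (t - s)) + s^Suc k*(t-s)" .
  have "s * (real (Suc k) * s^k * (t - s)) \<le> t*(real (Suc k) * s^k * (t - s))"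
    using assms by (intro mult_right_mono) auto
  then have "real (Suc (Suc k)) * s^(Suc k) * (t - s) \<le> t*(real (Suc k) * s^k * (t - s)) + s^Suc k*(t-s)"
    by (simp add: algebra_simps)
  with A show ?case by linarith
qed

lemma suff:
  fixes f :: "complex \<Rightarrow> complex" and b1 :: complex and b :: "nat \<Rightarrow> real"
  assumes A: "class_A f"
    and nz: "\<And>z. z \<in> ball 0 1 \<Longrightarrow> z \<noteq> 0 \<Longrightarrow> f z \<noteq> 0"
    and bpos: "\<And>n. n \<ge> 2 \<Longrightarrow> b n \<ge> 0"
    and ser: "\<And>z. z \<in> ball 0 1 \<Longrightarrow> z \<noteq> 0 \<Longrightarrow>
           (\<lambda>m. (-1) ^ (m + 2) * complex_of_real (b (m + 2)) * z ^ (m + 2))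
             sums (z / f z - 1 - b1 * z)"
    and sm: "summable (\<lambda>m. real (m + 1) * b (m + 2))"
    and le: "(\<Sum>m. real (m + 1) * b (m + 2)) \<le> 1"
  shows "inj_on f (ball 0 1)"
proof (rule inj_onI)
  fix z1 z2 assume z1: "z1 \<in> ball 0 1" and z2: "z2 \<in> ball 0 1" and eq: "f z1 = f z2"
  have f0: "f 0 = 0" using A by (simp add: class_A_def)
  show "z1 = z2"
  proof (rule ccontr)
    assume ne: "z1 \<noteq> z2"
    have n1: "z1 \<noteq> 0"
    proof
      assume "z1 = 0" then have "z2 \<noteq> 0" "f z2 = 0" using ne eq f0 by auto
      then show False using nz z2 by blast
    qed
    have n2: "z2 \<noteq> 0"
    proof
      assume "z2 = 0" then have "f z1 = 0" using eq f0 by auto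
      then show False using nz z1 n1 by blast
    qed
    define w where "w = f z1"
    have wnz: "w \<noteq> 0" using nz[OF z1 n1] w_def by simp
    have S: "(\<lambda>m. (-1) ^ (m + 2) * complex_of_real (b (m + 2)) * z ^ (m + 1))
             sums (1/w - 1/z - b1)" if z: "z \<in> ball 0 1" "z \<noteq> 0" "f z = w" for z
    proof -
      have "(\<lambda>m. (-1) ^ (m + 2) * complex_of_real (b (m + 2)) * z ^ (m + 2) / z)
             sums ((z / f z - 1 - b1 * z) / z)"
        using sums_divide[OF ser[OF z(1,2)]] by blast
      moreover have "(z / f z - 1 - b1 * z) / z = 1/w - 1/z - b1"
        using z by (simp add: field_simps)
      moreover have "\<And>m. (-1) ^ (m + 2) * complex_of_real (b (m + 2)) * z ^ (m + 2) / z
           = (-1) ^ (m + 2) * complex_of_real (b (m + 2)) * z ^ (m + 1)"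
        using z by (simp add: field_simps power_Suc)
      ultimately show ?thesis by simp
    qed
    have D: "(\<lambda>m. (-1) ^ (m + 2) * complex_of_real (b (m + 2)) * (z2 ^ (m + 1) - z1 ^ (m + 1)))
             sums (1/z1 - 1/z2)"
    proof -
      have "(\<lambda>m. (-1) ^ (m + 2) * complex_of_real (b (m + 2)) * z2 ^ (m + 1)
             - (-1) ^ (m + 2) * complex_of_real (b (m + 2)) * z1 ^ (m + 1))
             sums ((1/w - 1/z2 - b1) - (1/w - 1/z1 - b1))"
        by (rule sums_diff[OF S[OF z2 n2] S[OF z1 n1]]) (use eq w_def in auto)
      then show ?thesis by (simp add: algebra_simps)
    qed
    have bound: "norm ((-1) ^ (m + 2) * complex_of_real (b (m + 2)) * (z2 ^ (m + 1) - z1 ^ (m + 1)))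
        \<le> (real (m + 1) * b (m + 2)) * norm (z2 - z1)" for m
    proof -
      have "norm (z2 ^ (m + 1) - z1 ^ (m + 1)) \<le> real (m+1) * norm (z2 - z1)"
        using z1 z2 by (intro norm_power_diff) auto
      moreover have "b (m+2) \<ge> 0" using bpos by simp
      moreover have "norm ((-1) ^ (m + 2) * complex_of_real (b (m + 2)) * X) = b (m+2) * norm X" for X
        using \<open>b (m+2) \<ge> 0\<close> by (simp add: norm_mult norm_power)
      ultimately show ?thesis
        by (metis (no_types, lifting) mult.assoc mult.commute mult_left_mono)
    qed
    have "norm (1/z1 - 1/z2) \<le> (\<Sum>m. (real (m + 1) * b (m + 2)) * norm (z2 - z1))"
      using norm_suminf_le[OF bound summable_mult2[OF sm]] D by (simp add: sums_iff)
    also have "\<dots> = (\<Sum>m. real (m + 1) * b (m + 2)) * norm (z2 - z1)"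
      using suminf_mult2[OF sm] by simp
    also have "\<dots> \<le> norm (z2 - z1)" using mult_right_mono[OF le norm_ge_zero] by simp
    finally have L: "norm (1/z1 - 1/z2) \<le> norm (z2 - z1)" .
    have "1/z1 - 1/z2 = (z2 - z1) / (z1*z2)" using n1 n2 by (simp add: field_simps)
    then have "norm (1/z1 - 1/z2) = norm (z2 - z1) / (norm z1 * norm z2)"
      by (simp add: norm_divide norm_mult)
    with L have "norm (z2 - z1) / (norm z1 * norm z2) \<le> norm (z2 - z1)" by simp
    moreover have "norm (z2 - z1) > 0" using ne by simp
    moreover have "norm z1 * norm z2 > 0" using n1 n2 by simp
    ultimately have "1 \<le> norm z1 * norm z2" by (simp add: field_simps)
    moreover have "norm z1 * norm z2 < 1"
    proof -
      have "norm z1 < 1" "norm z2 < 1" using z1 z2 by auto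
      then have "norm z1 * norm z2 < 1 * 1" by (intro mult_strict_mono') auto
      then show ?thesis by simp
    qed
    ultimately show False by simp
  qed
qed

lemma nec:
  fixes f :: "complex \<Rightarrow> complex" and b1 :: complex and b :: "nat \<Rightarrow> real"
  assumes A: "class_A f"
    and nz: "\<And>z. z \<in> ball 0 1 \<Longrightarrow> z \<noteq> 0 \<Longrightarrow> f z \<noteq> 0"
    and bpos: "\<And>n. n \<ge> 2 \<Longrightarrow> b n \<ge> 0"
    and ser: "\<And>z. z \<in> ball 0 1 \<Longrightarrow> z \<noteq> 0 \<Longrightarrow>
           (\<lambda>m. (-1) ^ (m + 2) * complex_of_real (b (m + 2)) * z ^ (m + 2))
             sums (z / f z - 1 - b1 * z)"
    and inj: "inj_on f (ball 0 1)"
  shows "summable (\<lambda>m. real (m + 1) * b (m + 2)) \<and>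
            (\<Sum>m. real (m + 1) * b (m + 2)) \<le> 1"
proof (rule ccontr)
  assume H: "\<not> ?thesis"
  have b0: "b (m+2) \<ge> 0" for m using bpos by simp
  have "\<exists>N. (\<Sum>m<N. real (m + 1) * b (m + 2)) > 1"
  proof (rule ccontr)
    assume "\<not> ?thesis"
    then have le: "\<And>N. (\<Sum>m<N. real (m + 1) * b (m + 2)) \<le> 1" by (simp add: not_less)
    have sm: "summable (\<lambda>m. real (m + 1) * b (m + 2))"
      by (rule summableI_nonneg_bounded[OF _ le], rule mult_nonneg_nonneg[OF _ b0]) simp
    moreover have "(\<Sum>m. real (m + 1) * b (m + 2)) \<le> 1"
      by (rule suminf_le_const[OF sm le])
    ultimately show False using H by blast
  qed
  then obtain N where N: "(\<Sum>m<N. real (m + 1) * b (m + 2)) > 1" by blast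
  define Q where "Q x = (\<Sum>m<N. real (m + 1) * b (m + 2) * x^(m+2))" for x :: real
  have Q1: "Q 1 > 1" using N by (simp add: Q_def)
  have "isCont Q 1" unfolding Q_def by (intro continuous_intros)
  then have "(Q \<longlongrightarrow> Q 1) (at 1)" by (simp add: isCont_def)
  from order_tendstoD(1)[OF this Q1] obtain d where d: "d > 0"
    and dd: "\<And>x. x \<noteq> 1 \<Longrightarrow> dist x 1 < d \<Longrightarrow> 1 < Q x"
    unfolding eventually_at by blast
  define s where "s = max (1/2) (1 - d/2)"
  have s0: "0 < s" and s1: "s < 1" using d by (auto simp: s_def)
  have Qs: "1 < Q s" using dd[of s] d s1 by (auto simp: s_def dist_real_def)
  define t where "t = (s + 1) / 2"
  have st: "s < t" "t < 1" "0 < t" using s0 s1 by (auto simp: t_def)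
  define P where "P x = (\<Sum>m. b (m + 2) * x^(m+2))" for x :: real
  have Pprops: "(\<lambda>m. b (m + 2) * x^(m+2)) sums P x \<and>
      complex_of_real (P x) = - of_real x / f (- of_real x) - 1 + b1 * of_real x"
    if x: "0 < x" "x < 1" for x
  proof -
    have z: "- complex_of_real x \<in> ball 0 1" "- complex_of_real x \<noteq> 0" using x by auto
    have eqm: "\<And>m. (-1) ^ (m + 2) * complex_of_real (b (m + 2)) * (- complex_of_real x) ^ (m + 2)
        = complex_of_real (b (m + 2) * x^(m+2))"
    proof -
      fix m :: nat
      have h: "(-1) ^ (m + 2) * (- complex_of_real x) ^ (m + 2) = (complex_of_real x) ^ (m + 2)"
        by (simp add: power_mult_distrib[symmetric])
      have "(-1) ^ (m + 2) * complex_of_real (b (m + 2)) * (- complex_of_real x) ^ (m + 2)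
          = complex_of_real (b (m + 2)) * ((-1) ^ (m + 2) * (- complex_of_real x) ^ (m + 2))"
        by (simp only: mult_ac)
      also have "\<dots> = complex_of_real (b (m + 2)) * (complex_of_real x) ^ (m + 2)"
        by (simp only: h)
      also have "\<dots> = complex_of_real (b (m + 2) * x^(m+2))" by simp
      finally show "(-1) ^ (m + 2) * complex_of_real (b (m + 2)) * (- complex_of_real x) ^ (m + 2)
        = complex_of_real (b (m + 2) * x^(m+2))" .
    qed
    have cs0: "(\<lambda>m. complex_of_real (b (m + 2) * x^(m+2)))
      sums (- complex_of_real x / f (- complex_of_real x) - 1 - b1 * (- complex_of_real x))"
      using ser[OF z] unfolding eqm .
    have e2: "- complex_of_real x / f (- complex_of_real x) - 1 - b1 * (- complex_of_real x)
       = - complex_of_real x / f (- complex_of_real x) - 1 + b1 * complex_of_real x" by simp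
    have cs: "(\<lambda>m. complex_of_real (b (m + 2) * x^(m+2)))
      sums (- complex_of_real x / f (- complex_of_real x) - 1 + b1 * complex_of_real x)"
      using cs0 unfolding e2 .
    then have "summable (\<lambda>m. complex_of_real (b (m + 2) * x^(m+2)))" by (rule sums_summable)
    then have rs: "summable (\<lambda>m. b (m + 2) * x^(m+2))" by (rule summable_complex_of_real[THEN iffD1])
    then have ps: "(\<lambda>m. b (m + 2) * x^(m+2)) sums P x" unfolding P_def by (rule summable_sums)
    then have "(\<lambda>m. complex_of_real (b (m + 2) * x^(m+2))) sums complex_of_real (P x)"
      by (rule sums_of_real)
    from sums_unique2[OF this cs]
    have "complex_of_real (P x) = - of_real x / f (- of_real x) - 1 + b1 * of_real x" .
    with ps show ?thesis by (intro conjI)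
  qed
  have Pnn: "P x \<ge> 0" if "0 < x" "x < 1" for x
  proof -
    have "summable (\<lambda>m. b (m + 2) * x^(m+2))" using Pprops[OF that] sums_summable by blast
    moreover have "\<And>m. 0 \<le> b (m + 2) * x^(m+2)" using b0 that by simp
    ultimately show ?thesis unfolding P_def by (rule suminf_nonneg)
  qed
  define \<psi> where "\<psi> x = (1 + P x) / x" for x :: real
  have psi_f: "complex_of_real (\<psi> x) = b1 - 1 / f (- complex_of_real x)" if x: "0 < x" "x < 1" for x
  proof -
    have fnz: "f (- complex_of_real x) \<noteq> 0" using nz[of "- complex_of_real x"] x by auto
    have "complex_of_real (\<psi> x) = (1 + complex_of_real (P x)) / complex_of_real x"
      by (simp add: \<psi>_def)
    also have "\<dots> = b1 - 1 / f (- complex_of_real x)"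
      using Pprops[OF x] x fnz by (simp add: field_simps)
    finally show ?thesis .
  qed
  have key: "t - s \<le> s * P t - t * P s"
  proof -
    have "(\<lambda>m. s * (b (m + 2) * t^(m+2)) - t * (b (m + 2) * s^(m+2))) sums (s * P t - t * P s)"
      using Pprops[OF st(3,2)] Pprops[OF s0 s1] by (intro sums_diff sums_mult) auto
    moreover have "s * (b (m + 2) * t^(m+2)) - t * (b (m + 2) * s^(m+2))
        = s * t * b (m+2) * (t^(Suc m) - s^(Suc m))" for m
      by (simp add: algebra_simps)
    ultimately have S: "(\<lambda>m. s * t * b (m+2) * (t^(Suc m) - s^(Suc m))) sums (s * P t - t * P s)"
      by simp
    have tnn: "0 \<le> s * t * b (m+2) * (t^(Suc m) - s^(Suc m))" for m
    proof -
      have "s^(Suc m) \<le> t^(Suc m)" using s0 st by (intro power_mono) auto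
      then show ?thesis using s0 st b0[of m] by (intro mult_nonneg_nonneg) auto
    qed
    have low: "real (m + 1) * b (m + 2) * s^(m+2) * (t - s) \<le> s * t * b (m+2) * (t^(Suc m) - s^(Suc m))" for m
    proof -
      have "real (Suc m) * s^m * (t - s) \<le> t^(Suc m) - s^(Suc m)"
        using pow_diff_lower[of s t m] s0 st by simp
      then have "s * t * b (m+2) * (real (Suc m) * s^m * (t - s)) \<le> s * t * b (m+2) * (t^(Suc m) - s^(Suc m))"
        using s0 st b0[of m] by (intro mult_left_mono) auto
      moreover have "s * s * b (m+2) * (real (Suc m) * s^m * (t - s)) \<le> s * t * b (m+2) * (real (Suc m) * s^m * (t - s))"
        using s0 st b0[of m] by (intro mult_right_mono mult_left_mono) auto
      ultimately show ?thesis by (simp add: algebra_simps power2_eq_square)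
    qed
    have "(t - s) * Q s = (\<Sum>m<N. real (m + 1) * b (m + 2) * s^(m+2) * (t - s))"
      by (simp add: Q_def sum_distrib_left algebra_simps)
    also have "\<dots> \<le> (\<Sum>m<N. s * t * b (m+2) * (t^(Suc m) - s^(Suc m)))"
      by (intro sum_mono low)
    also have "\<dots> \<le> s * P t - t * P s"
      using sum_le_suminf[OF sums_summable[OF S], of "{..<N}"] tnn sums_unique[OF S] by auto
    finally have "(t - s) * Q s \<le> s * P t - t * P s" .
    moreover have "t - s \<le> (t - s) * Q s" using Qs st by simp
    ultimately show ?thesis by linarith
  qed
  have psi_st: "\<psi> s \<le> \<psi> t"
    using key s0 st by (simp add: \<psi>_def divide_simps algebra_simps)
  have psit: "\<psi> t > 0" using Pnn[OF st(3,2)] st by (simp add: \<psi>_def)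
  define u where "u = min (s/2) (1 / \<psi> t)"
  have u0: "0 < u" and us: "u < s" "u \<le> s" using s0 psit by (auto simp: u_def)
  have u1: "u < 1" using us s1 by simp
  have psi_u: "\<psi> t \<le> \<psi> u"
  proof -
    have "\<psi> t \<le> 1 / u" using psit u0 by (simp add: u_def field_simps min_def)
    also have "1 / u \<le> \<psi> u" using Pnn[OF u0 u1] u0 by (simp add: \<psi>_def divide_right_mono)
    finally show ?thesis .
  qed
  have fc: "continuous_on (ball 0 1) f"
    using A by (simp add: class_A_def holomorphic_on_imp_continuous_on)
  have cont: "continuous_on {u..s} \<psi>"
  proof -
    have c0: "continuous_on {u..s} (\<lambda>x::real. - complex_of_real x)" by (intro continuous_intros)
    have im: "(\<lambda>x. - complex_of_real x) ` {u..s} \<subseteq> ball 0 1" using u0 s1 by auto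
    have c1: "continuous_on {u..s} (\<lambda>x. f (- complex_of_real x))"
      by (rule continuous_on_compose2[OF fc c0 im])
    have fnz: "\<forall>x\<in>{u..s}. f (- complex_of_real x) \<noteq> 0"
    proof
      fix x assume "x \<in> {u..s}"
      then have "0 < x" "x < 1" using u0 s1 by auto
      then show "f (- complex_of_real x) \<noteq> 0" using nz[of "- complex_of_real x"] by simp
    qed
    have c2: "continuous_on {u..s} (\<lambda>x. 1 / f (- complex_of_real x))"
      by (rule continuous_on_divide[OF continuous_on_const c1 fnz])
    have c3: "continuous_on {u..s} (\<lambda>x. b1 - 1 / f (- complex_of_real x))"
      by (rule continuous_on_diff[OF continuous_on_const c2])
    have c4: "continuous_on {u..s} (\<lambda>x. Re (b1 - 1 / f (- complex_of_real x)))"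
      by (rule continuous_on_Re[OF c3])
    show ?thesis
    proof (rule continuous_on_eq[OF c4])
      fix x assume "x \<in> {u..s}"
      then have x: "0 < x" "x < 1" using u0 s1 by auto
      have "Re (b1 - 1 / f (- complex_of_real x)) = Re (complex_of_real (\<psi> x))"
        using psi_f[OF x] by simp
      then show "Re (b1 - 1 / f (- complex_of_real x)) = \<psi> x" by simp
    qed
  qed
  obtain v where v: "u \<le> v" "v \<le> s" "\<psi> v = \<psi> t"
    using IVT2'[of \<psi> s "\<psi> t" u, OF psi_st psi_u us(2) cont] by blast
  have v0: "0 < v" "v < 1" using v u0 s1 by auto
  have "b1 - 1 / f (- complex_of_real v) = complex_of_real (\<psi> v)"
    using psi_f[OF v0] by simp
  also have "\<dots> = complex_of_real (\<psi> t)" using v(3) by simp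
  also have "\<dots> = b1 - 1 / f (- complex_of_real t)" using psi_f[OF st(3,2)] by simp
  finally have "b1 - 1 / f (- complex_of_real v) = b1 - 1 / f (- complex_of_real t)" .
  then have "f (- complex_of_real v) = f (- complex_of_real t)" by simp
  moreover have "- complex_of_real v \<in> ball 0 1" "- complex_of_real t \<in> ball 0 1" using v0 st by auto
  ultimately have "- complex_of_real v = - complex_of_real t" using inj by (meson inj_onD)
  then have "v = t" by simp
  then show False using v st by simp
qed

theorem theorem5p1:
  fixes f :: "complex \<Rightarrow> complex" and b1 :: complex and b :: "nat \<Rightarrow> real"
  assumes "class_A f"
    and "\<And>z. z \<in> ball 0 1 \<Longrightarrow> z \<noteq> 0 \<Longrightarrow> f z \<noteq> 0"
    and "\<And>n. n \<ge> 2 \<Longrightarrow> b n \<ge> 0"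
    and "\<And>z. z \<in> ball 0 1 \<Longrightarrow> z \<noteq> 0 \<Longrightarrow>
           (\<lambda>m. (-1) ^ (m + 2) * complex_of_real (b (m + 2)) * z ^ (m + 2))
             sums (z / f z - 1 - b1 * z)"
  shows "inj_on f (ball 0 1) \<longleftrightarrow>
           (summable (\<lambda>m. real (m + 1) * b (m + 2)) \<and>
            (\<Sum>m. real (m + 1) * b (m + 2)) \<le> 1)"
  using suff[OF assms] nec[OF assms] by blast

end
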